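(* Let $\mu>0$ and let $\{x^n\}$ be generated by GAITA (as in the context) from any $x^0\in\mathbf{R}^N$. For every $n\in\mathbf{N}$, with $i=(n\bmod N)+1$, either (a) $x_i^{n+1}=0$, or (b) $|x_i^{n+1}|\geq\eta_{\mu,q}$ and $$A_i^T(Ax^{n+1}-y)+\lambda q\, sgn(x_i^{n+1})|x_i^{n+1}|^{q-1}=\Big(\frac1\mu-A_i^TA_i\Big)(x_i^n-x_i^{n+1}).$$
   Context: Let $A\in\mathbf{R}^{m\times N}$ have columns $A_1,\dots,A_N$, $y\in\mathbf{R}^m$, $\lambda>0$, $q\in(0,1)$. For a step size $\mu>0$ set $\tau_{\mu,q}=\frac{2-q}{2-2q}(2\lambda\mu(1-q))^{\frac{1}{2-q}}$ and $\eta_{\mu,q}=(2\lambda\mu(1-q))^{\frac{1}{2-q}}$. For $z\in\mathbf{R}$ let $prox_{\mu,\lambda|\cdot|^q}(z)=\arg\min_{v\in\mathbf{R}}\{\frac{(z-v)^2}{2\mu}+\lambda|v|^q\}$ (a single point when $|z|\neq\tau_{\mu,q}$). Define $\mathcal{T}(z,w)$ as the unique element of $prox_{\mu,\lambda|\cdot|^q}(z)$ if $|z|\neq\tau_{\mu,q}$, and, if $|z|=\tau_{\mu,q}$, as $sgn(z)\eta_{\mu,q}$ when $w\neq0$ and $0$ when $w=0$ ($sgn(0)=0$). GAITA: given $x^0\in\mathbf{R}^N$, for $n=0,1,2,\dots$ let $i=(n\bmod N)+1$, $z_i^n=x_i^n-\mu A_i^T(Ax^n-y)$, $x_i^{n+1}=\mathcal{T}(z_i^n,x_i^n)$,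 $x_j^{n+1}=x_j^n$ for $j\neq i$. *)

theory Defs
  imports "HOL-Analysis.Analysis"
begin

(* Matrices A in R^{m x N} are functions nat => nat => real, A j k = entry (row j, column k),
   with rows j < m and columns k < N.
   Columns are indexed 0..N-1 (paper's index i corresponds to i-1 here). *)

definition matvec :: "nat \<Rightarrow> nat \<Rightarrow> (nat \<Rightarrow> nat \<Rightarrow> real) \<Rightarrow> (nat \<Rightarrow> real) \<Rightarrow> (nat \<Rightarrow> real)" where
  "matvec m N A x = (\<lambda>j. \<Sum>k<N. A j k * x k)"

definition colT :: "nat \<Rightarrow> (nat \<Rightarrow> nat \<Rightarrow> real) \<Rightarrow> nat \<Rightarrow> (nat \<Rightarrow> real) \<Rightarrow> real" where
  "colT m A i v = (\<Sum>j<m. A j i * v j)"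

definition tau :: "real \<Rightarrow> real \<Rightarrow> real \<Rightarrow> real" where
  "tau lam mu q = (2 - q) / (2 - 2 * q) * (2 * lam * mu * (1 - q)) powr (1 / (2 - q))"

definition eta :: "real \<Rightarrow> real \<Rightarrow> real \<Rightarrow> real" where
  "eta lam mu q = (2 * lam * mu * (1 - q)) powr (1 / (2 - q))"

(* set of minimizers of (z-v)^2/(2 mu) + lam |v|^q ; |v|^q written with powr, 0 powr q = 0 *)
definition prox :: "real \<Rightarrow> real \<Rightarrow> real \<Rightarrow> real \<Rightarrow> real set" where
  "prox lam mu q z = {v. \<forall>u. (z - v)\<^sup>2 / (2 * mu) + lam * \<bar>v\<bar> powr q
                          \<le> (z - u)\<^sup>2 / (2 * mu) + lam * \<bar>u\<bar> powr q}"

definition Tmap :: "real \<Rightarrow> real \<Rightarrow> real \<Rightarrow> real \<Rightarrow> real \<Rightarrow> real" where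
  "Tmap lam mu q z w =
     (if \<bar>z\<bar> \<noteq> tau lam mu q then (THE v. v \<in> prox lam mu q z)
      else if w \<noteq> 0 then sgn z * eta lam mu q else 0)"

definition gaita_step :: "nat \<Rightarrow> nat \<Rightarrow> (nat \<Rightarrow> nat \<Rightarrow> real) \<Rightarrow> (nat \<Rightarrow> real) \<Rightarrow> real \<Rightarrow> real \<Rightarrow> real
     \<Rightarrow> nat \<Rightarrow> (nat \<Rightarrow> real) \<Rightarrow> (nat \<Rightarrow> real)" where
  "gaita_step m N A y lam mu q n x =
     (let i = n mod N;
          z = x i - mu * colT m A i (\<lambda>j. matvec m N A x j - y j)
      in x(i := Tmap lam mu q z (x i)))"

fun gaita :: "nat \<Rightarrow> nat \<Rightarrow> (nat \<Rightarrow> nat \<Rightarrow> real) \<Rightarrow> (nat \<Rightarrow> real) \<Rightarrow> real \<Rightarrow> real \<Rightarrow> real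
     \<Rightarrow> (nat \<Rightarrow> real) \<Rightarrow> nat \<Rightarrow> (nat \<Rightarrow> real)" where
  "gaita m N A y lam mu q x0 0 = x0"
| "gaita m N A y lam mu q x0 (Suc n) = gaita_step m N A y lam mu q n (gaita m N A y lam mu q x0 n)"

end

theory Submission
  imports Defs
begin

lemma alg1: fixes E Z M Q L :: real assumes "M > 0" "Q < 1" "L > 0"
  shows "(E^2 - 2*Z*E)/(2*M) + L * (E^2 / (2*L*M*(1-Q))) = E * ((2-Q)/(2-2*Q) * E - Z) / M"
  using assms by (simp add: field_simps power2_eq_square)

lemma alg2: fixes E M Q L :: real assumes "M > 0" "Q < 1" "L > 0"
  shows "E + M*L*Q*(E/(2*L*M*(1-Q))) = (2-Q)/(2-2*Q) * E"
  using assms by (simp add: field_simps)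
lemma alg3: fixes M Q L :: real assumes "M > 0" "Q < 1" "L > 0"
  shows "M*L*Q*(1-Q) * (1/(2*L*M*(1-Q))) = Q/2"
  using assms by (simp add: field_simps)
lemma alg4: fixes M Q L X :: real
  shows "M*L*Q*((Q-1)*X) = -(M*L*Q*(1-Q)*X)"
  by (simp add: algebra_simps)
lemma alg5: fixes v z M L Q X :: real assumes "M > 0"
  shows "(v - z)/M + L*Q*X = 0 \<Longrightarrow> z = v + M*L*Q*X"
  using assms by (simp add: field_simps)

locale P = fixes lam mu q :: real
  assumes lam: "lam > 0" and mu: "mu > 0" and q0: "0 < q" and q1: "q < 1"
begin

definition c where "c = 2*lam*mu*(1-q)"
lemma c_pos: "c > 0" unfolding c_def using lam mu q1 by simp

lemma eta_pos: "eta lam mu q > 0" unfolding eta_def c_def[symmetric] using c_pos by simp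

lemma eta_pow: "eta lam mu q powr (2-q) = c"
proof -
  have "eta lam mu q powr (2-q) = c powr (1/(2-q) * (2-q))"
    unfolding eta_def c_def by (simp add: powr_powr)
  also have "\<dots> = c" using q1 c_pos by simp
  finally show ?thesis .
qed

lemma eta_pow2: "eta lam mu q powr (q-2) = 1/c"
proof -
  have "eta lam mu q powr (q-2) = eta lam mu q powr (-(2-q))" by simp
  also have "\<dots> = 1 / eta lam mu q powr (2-q)" by (rule powr_minus_divide)
  finally show ?thesis using eta_pow by simp
qed

lemma eta_pow1: "eta lam mu q powr (q-1) = eta lam mu q / c"
proof -
  have "eta lam mu q powr (q-1) = eta lam mu q powr ((q-2) + 1)" by simp
  also have "\<dots> = eta lam mu q powr (q-2) * eta lam mu q powr 1" by (rule powr_add)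
  finally have "eta lam mu q powr (q-1) = eta lam mu q powr (q-2) * eta lam mu q powr 1" .
  thus ?thesis using eta_pow2 eta_pos by simp
qed

lemma eta_powq: "eta lam mu q powr q = (eta lam mu q)^2 / c"
proof -
  have "eta lam mu q powr q = eta lam mu q powr ((q-2) + 2)" by simp
  also have "\<dots> = eta lam mu q powr (q-2) * eta lam mu q powr 2" by (rule powr_add)
  finally have "eta lam mu q powr q = eta lam mu q powr (q-2) * eta lam mu q powr 2" .
  thus ?thesis using eta_pow2 eta_pos by simp
qed

lemma tau_eq: "tau lam mu q = (2-q)/(2-2*q) * eta lam mu q"
  unfolding tau_def eta_def by simp

lemma tau_pos: "tau lam mu q > 0" using tau_eq eta_pos q1 by simp


lemma abs_powr_deriv:
  assumes "v \<noteq> (0::real)"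
  shows "((\<lambda>u. \<bar>u\<bar> powr q) has_real_derivative q * sgn v * \<bar>v\<bar> powr (q-1)) (at v)"
proof (cases "v > 0")
  case True
  have "((\<lambda>u. u powr q) has_real_derivative q * v powr (q-1)) (at v)"
    using True by (rule has_real_derivative_powr)
  then have "((\<lambda>u. \<bar>u\<bar> powr q) has_real_derivative q * v powr (q-1)) (at v)"
    by (rule has_field_derivative_transform_within_open[where S="{0<..}"]) (use True in auto)
  thus ?thesis using True by simp
next
  case False
  then have neg: "v < 0" using assms by simp
  have d: "((\<lambda>u. - u) has_real_derivative -1) (at v)"
    by (auto intro!: derivative_eq_intros)
  have "((\<lambda>u. (- u) powr q) has_real_derivative q * (-v) powr (q - real 1) * -1) (at v)"
    using DERIV_fun_powr[OF d] neg by simp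
  then have "((\<lambda>u. \<bar>u\<bar> powr q) has_real_derivative q * (-v) powr (q - real 1) * -1) (at v)"
    by (rule has_field_derivative_transform_within_open[where S="{..<0}"]) (use neg in auto)
  thus ?thesis using neg by simp
qed

definition F where "F z v = (z - v)^2 / (2*mu) + lam * \<bar>v\<bar> powr q"

lemma prox_iff: "v \<in> prox lam mu q z \<longleftrightarrow> (\<forall>u. F z v \<le> F z u)"
  unfolding prox_def F_def by simp

lemma F_deriv:
  assumes "v \<noteq> 0"
  shows "(F z has_real_derivative ((v - z)/mu + lam*q* sgn v *\<bar>v\<bar> powr (q-1))) (at v)"
proof -
  have d1: "((\<lambda>u. (z - u)^2 / (2*mu)) has_real_derivative (2 * (z - v) * (-1)) / (2*mu)) (at v)"
    using mu by (auto intro!: derivative_eq_intros simp: field_simps)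
  have d2: "((\<lambda>u. lam * \<bar>u\<bar> powr q) has_real_derivative lam * (q * sgn v * \<bar>v\<bar> powr (q-1))) (at v)"
    by (rule DERIV_cmult[OF abs_powr_deriv[OF assms]])
  have "((\<lambda>u. (z - u)^2 / (2*mu) + lam * \<bar>u\<bar> powr q) has_real_derivative
      (2 * (z - v) * (-1)) / (2*mu) + lam * (q * sgn v * \<bar>v\<bar> powr (q-1))) (at v)"
    by (rule DERIV_add[OF d1 d2])
  moreover have "(2 * (z - v) * (-1)) / (2*mu) + lam * (q * sgn v * \<bar>v\<bar> powr (q-1))
      = (v - z)/mu + lam*q* sgn v *\<bar>v\<bar> powr (q-1)" using mu by (simp add: field_simps)
  ultimately show ?thesis unfolding F_def[abs_def] by (simp add: mult.assoc)
qed

lemma foc: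
  assumes "v \<in> prox lam mu q z" "v \<noteq> 0"
  shows "(v - z)/mu + lam*q* sgn v *\<bar>v\<bar> powr (q-1) = 0"
  using DERIV_local_min[OF F_deriv[OF assms(2)], of 1] assms(1) unfolding prox_iff by auto

lemma abs_mult_powr: "sgn v * v * \<bar>v\<bar> powr (q-1) = \<bar>v\<bar> powr q" if "v \<noteq> (0::real)"
proof -
  have "\<bar>v\<bar> powr q = \<bar>v\<bar> powr ((q-1) + 1)" by simp
  also have "\<dots> = \<bar>v\<bar> powr (q-1) * \<bar>v\<bar> powr 1" by (rule powr_add)
  moreover have "v * sgn v = \<bar>v\<bar>" by (simp add: abs_if sgn_if)
  ultimately show ?thesis using that by (simp add: mult.commute)
qed

lemma bound:
  assumes "v \<in> prox lam mu q z" "v \<noteq> 0"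
  shows "\<bar>v\<bar> \<ge> eta lam mu q"
proof (rule ccontr)
  assume "\<not> ?thesis"
  then have lt: "\<bar>v\<bar> < eta lam mu q" by simp
  define P where "P = \<bar>v\<bar> powr q"
  have Ppos: "P > 0" unfolding P_def using assms by simp
  have f: "(v - z)/mu + lam*q* sgn v *\<bar>v\<bar> powr (q-1) = 0" by (rule foc[OF assms])
  then have "v * ((v - z)/mu + lam*q* sgn v *\<bar>v\<bar> powr (q-1)) = 0" by simp
  then have "(v * v - z * v)/mu + lam*q*(sgn v * v *\<bar>v\<bar> powr (q-1)) = 0"
    using mu by (simp add: field_simps)
  then have zv: "(v * v - z * v)/mu + lam*q*P = 0" using abs_mult_powr[OF assms(2)] P_def by simp
  have "F z v \<le> F z 0" using assms(1) prox_iff by auto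
  then have h0: "(z - v)^2 / (2*mu) + lam * P \<le> z^2/(2*mu)" unfolding F_def P_def using q0 by simp
  have e: "((z - v)^2 + 2*mu*lam*P)/(2*mu) = (z - v)^2/(2*mu) + lam * P" using mu by (simp add: add_divide_distrib)
  with h0 have "((z - v)^2 + 2*mu*lam*P)/(2*mu) \<le> z^2/(2*mu)" by linarith
  then have h1: "(z - v)^2 + 2*mu*lam*P \<le> z^2" using mu by (simp add: divide_le_cancel)
  have h2: "z * v = v * v + mu*lam*q*P" using zv mu by (simp add: field_simps)
  from h1 h2 have ineq: "c * P \<le> v^2" unfolding c_def by (simp add: power2_eq_square algebra_simps)
  have "\<bar>v\<bar> powr (2-q) = \<bar>v\<bar> powr 2 / P" unfolding P_def by (simp add: powr_diff)
  also have "\<dots> = v^2 / P" using assms by simp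
  finally have X: "\<bar>v\<bar> powr (2-q) = v^2 / P" .
  have "c \<le> v^2 / P" using ineq Ppos by (simp add: pos_le_divide_eq mult.commute)
  then have "\<bar>v\<bar> powr (2-q) \<ge> c" using X by simp
  moreover have "\<bar>v\<bar> powr (2-q) < eta lam mu q powr (2-q)"
    by (rule powr_less_mono2) (use q1 lt in auto)
  ultimately show False using eta_pow by simp
qed


definition psi where "psi t = t + mu*lam*q*t powr (q-1)"

lemma psi_mono:
  assumes "eta lam mu q \<le> a" "a < b"
  shows "psi a < psi b"
  unfolding psi_def
proof (rule DERIV_pos_imp_increasing[OF assms(2)])
  fix x assume x: "a \<le> x" "x \<le> b"
  have xpos: "x > 0" using x assms eta_pos by simp
  have d: "((\<lambda>t. t + mu*lam*q*t powr (q-1)) has_real_derivative 1 + mu*lam*q*((q-1) * x powr (q-1-1))) (at x)"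
    by (rule DERIV_add[OF DERIV_ident DERIV_cmult[OF has_real_derivative_powr[OF xpos]]])
  have "x powr (q-2) \<le> eta lam mu q powr (q-2)"
    by (rule powr_mono2') (use q1 eta_pos x assms in auto)
  then have "x powr (q-2) \<le> 1/c" using eta_pow2 by simp
  then have "mu*lam*q*(1-q) * x powr (q-2) \<le> mu*lam*q*(1-q) * (1/c)"
    using mu lam q0 q1 by (intro mult_left_mono) auto
  also have "\<dots> = q/2" unfolding c_def by (rule alg3[OF mu q1 lam])
  finally have "mu*lam*q*(1-q) * x powr (q-2) \<le> q/2" .
  moreover have "mu*lam*q*((q-1) * x powr (q-1-1)) = -(mu*lam*q*(1-q) * x powr (q-2))"
    using alg4[of mu lam q "x powr (q-2)"] by simp
  ultimately have "0 < 1 + mu*lam*q*((q-1) * x powr (q-1-1))" using q1 by linarith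
  with d show "\<exists>y. ((\<lambda>t. t + mu*lam*q*t powr (q-1)) has_real_derivative y) (at x) \<and> 0 < y" by blast
qed

lemma psi_mono_le: "eta lam mu q \<le> a \<Longrightarrow> a \<le> b \<Longrightarrow> psi a \<le> psi b"
  using psi_mono by (cases "a = b") (auto intro: less_imp_le)

lemma psi_eta: "psi (eta lam mu q) = tau lam mu q"
  unfolding psi_def tau_eq eta_pow1 c_def by (rule alg2[OF mu q1 lam])

lemma z_psi:
  assumes "v \<in> prox lam mu q z" "v \<noteq> 0"
  shows "\<bar>z\<bar> = psi \<bar>v\<bar> \<and> sgn z = sgn v"
proof -
  have f: "(v - z)/mu + lam*q* sgn v * \<bar>v\<bar> powr (q-1) = 0" by (rule foc[OF assms])
  then have zeq: "z = v + mu*lam*q* sgn v * \<bar>v\<bar> powr (q-1)"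
    using alg5[OF mu, of v z lam q "sgn v * \<bar>v\<bar> powr (q-1)"] by (simp add: mult.assoc)
  have ppos: "psi \<bar>v\<bar> > 0" unfolding psi_def using assms mu lam q0
    by (intro add_pos_nonneg) auto
  show ?thesis
  proof (cases "v > 0")
    case True
    then have "z = psi \<bar>v\<bar>" using zeq unfolding psi_def by simp
    thus ?thesis using ppos True by simp
  next
    case False
    then have "v < 0" using assms by simp
    then have "z = - psi \<bar>v\<bar>" using zeq unfolding psi_def by simp
    thus ?thesis using ppos \<open>v < 0\<close> by simp
  qed
qed

lemma zero_not_min:
  assumes "\<bar>z\<bar> > tau lam mu q"
  shows "F z (sgn z * eta lam mu q) < F z 0"
proof -
  let ?e = "eta lam mu q"
  have zne: "z \<noteq> 0" using assms tau_pos by auto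
  have a: "\<bar>sgn z * ?e\<bar> = ?e" using zne eta_pos by (simp add: abs_mult)
  have zs: "z * sgn z = \<bar>z\<bar>" by (simp add: abs_if sgn_if)
  have ss: "sgn z * sgn z = 1" using zne by (simp add: sgn_if)
  have sq: "(z - sgn z * ?e)^2 = z^2 - 2*\<bar>z\<bar>*?e + ?e^2"
    using zs ss by (simp add: power2_eq_square algebra_simps)
  have "F z (sgn z * ?e) - F z 0 = (?e^2 - 2*\<bar>z\<bar>*?e)/(2*mu) + lam * ?e powr q"
    unfolding F_def a sq using q0 mu by (simp add: field_simps)
  also have "\<dots> = ?e * (tau lam mu q - \<bar>z\<bar>) / mu"
    unfolding eta_powq tau_eq c_def using alg1[OF mu q1 lam] by simp
  also have "\<dots> < 0" using assms eta_pos mu by (simp add: divide_neg_pos mult_pos_neg)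
  finally show ?thesis by simp
qed

lemma exists_min: "\<exists>v. v \<in> prox lam mu q z"
proof -
  have cont: "continuous_on (cball 0 (2*\<bar>z\<bar>)) (F z)"
    unfolding F_def[abs_def]
    by (intro continuous_intros continuous_on_powr') (use q0 mu in auto)
  obtain v where v: "v \<in> cball 0 (2*\<bar>z\<bar>)" "\<forall>u\<in>cball 0 (2*\<bar>z\<bar>). F z v \<le> F z u"
    using continuous_attains_inf[OF compact_cball _ cont] by auto
  have "F z v \<le> F z u" for u
  proof (cases "u \<in> cball 0 (2*\<bar>z\<bar>)")
    case True thus ?thesis using v by auto
  next
    case False
    then have "\<bar>u\<bar> > 2*\<bar>z\<bar>" by (simp add: dist_real_def)
    then have "\<bar>z - u\<bar> \<ge> \<bar>z\<bar>" by linarith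
    then have "\<bar>z\<bar>^2 \<le> \<bar>z - u\<bar>^2" by (intro power_mono) auto
    then have "z^2 / (2*mu) \<le> (z - u)^2/(2*mu)" using mu by (intro divide_right_mono) auto
    moreover have "0 \<le> lam * \<bar>u\<bar> powr q" using lam by simp
    ultimately have "F z 0 \<le> F z u" unfolding F_def using q0 by simp
    moreover have "F z v \<le> F z 0" using v by auto
    ultimately show ?thesis by simp
  qed
  thus ?thesis unfolding prox_iff by blast
qed

lemma psi_ge_tau: "eta lam mu q \<le> a \<Longrightarrow> tau lam mu q \<le> psi a"
  using psi_mono_le[of "eta lam mu q" a] psi_eta by simp

lemma unique_min:
  assumes "\<bar>z\<bar> \<noteq> tau lam mu q" "v1 \<in> prox lam mu q z" "v2 \<in> prox lam mu q z"
  shows "v1 = v2"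
proof -
  have zero_case: False if "w1 \<in> prox lam mu q z" "w2 \<in> prox lam mu q z" "w1 = 0" "w2 \<noteq> 0" for w1 w2
  proof -
    have "\<bar>z\<bar> = psi \<bar>w2\<bar>" using z_psi[OF that(2,4)] by simp
    moreover have "eta lam mu q \<le> \<bar>w2\<bar>" by (rule bound[OF that(2,4)])
    ultimately have "\<bar>z\<bar> > tau lam mu q" using psi_ge_tau assms(1) by force
    then have "F z (sgn z * eta lam mu q) < F z w1" using zero_not_min that(3) by simp
    with that(1) show False unfolding prox_iff by (meson not_le)
  qed
  show ?thesis
  proof (cases "v1 = 0 \<or> v2 = 0")
    case True
    then show ?thesis using zero_case assms by metis
  next
    case False
    then have n: "v1 \<noteq> 0" "v2 \<noteq> 0" by auto
    have z1: "\<bar>z\<bar> = psi \<bar>v1\<bar>" "sgn z = sgn v1" using z_psi[OF assms(2) n(1)] by auto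
    have z2: "\<bar>z\<bar> = psi \<bar>v2\<bar>" "sgn z = sgn v2" using z_psi[OF assms(3) n(2)] by auto
    have b1: "eta lam mu q \<le> \<bar>v1\<bar>" by (rule bound[OF assms(2) n(1)])
    have b2: "eta lam mu q \<le> \<bar>v2\<bar>" by (rule bound[OF assms(3) n(2)])
    have "\<bar>v1\<bar> = \<bar>v2\<bar>"
    proof (rule ccontr)
      assume "\<bar>v1\<bar> \<noteq> \<bar>v2\<bar>"
      then have "\<bar>v1\<bar> < \<bar>v2\<bar> \<or> \<bar>v2\<bar> < \<bar>v1\<bar>" by linarith
      thus False using psi_mono[OF b1] psi_mono[OF b2] z1 z2 by force
    qed
    moreover have "v1 = sgn v1 * \<bar>v1\<bar>" "v2 = sgn v2 * \<bar>v2\<bar>" by (simp_all add: sgn_mult_abs)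
    ultimately show ?thesis using z1 z2 by metis
  qed
qed

lemma Tmap_prop:
  fixes z w :: real
  defines "T \<equiv> Tmap lam mu q z w"
  shows "T = 0 \<or> (\<bar>T\<bar> \<ge> eta lam mu q \<and> (T - z)/mu + lam*q* sgn T * \<bar>T\<bar> powr (q-1) = 0)"
proof (cases "\<bar>z\<bar> = tau lam mu q")
  case False
  obtain v where v: "v \<in> prox lam mu q z" using exists_min by blast
  have "(THE v. v \<in> prox lam mu q z) = v"
    using v unique_min[OF False] by (intro the_equality) auto
  then have Tv: "T = v" unfolding T_def Tmap_def using False by simp
  show ?thesis
  proof (cases "v = 0")
    case False
    then show ?thesis using Tv bound[OF v False] foc[OF v False] by simp
  qed (use Tv in simp)
next
  case tz: True
  show ?thesis
  proof (cases "w = 0")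
    case True
    then show ?thesis unfolding T_def Tmap_def using tz by simp
  next
    case False
    let ?e = "eta lam mu q"
    have zne: "z \<noteq> 0" using tz tau_pos by auto
    have Te: "T = sgn z * ?e" unfolding T_def Tmap_def using tz False by simp
    have aT: "\<bar>T\<bar> = ?e" using Te zne eta_pos by (simp add: abs_mult)
    have sT: "sgn T = sgn z" using Te eta_pos by (simp add: sgn_mult)
    have zz: "z = sgn z * tau lam mu q" using tz sgn_mult_abs[of z] by simp
    have "(T - z)/mu + lam*q* sgn T * \<bar>T\<bar> powr (q-1)
        = sgn z * ((?e - tau lam mu q)/mu + lam*q* ?e powr (q-1))"
    proof -
      have "T - z = sgn z * (?e - tau lam mu q)" using Te zz by (simp add: right_diff_distrib)
      then show ?thesis unfolding sT aT by (simp add: algebra_simps)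
    qed
    also have "(?e - tau lam mu q)/mu + lam*q* ?e powr (q-1) = 0"
      unfolding eta_pow1 tau_eq c_def using mu lam q1 by (simp add: field_simps)
    finally show ?thesis using aT by simp
  qed
qed

end
lemma matvec_upd:
  assumes "i < N"
  shows "matvec m N A (X(i := t)) j = matvec m N A X j + A j i * (t - X i)"
proof -
  have "(\<Sum>k<N. A j k * (X(i := t)) k) = (\<Sum>k<N. A j k * X k + (if k = i then A j i * (t - X i) else 0))"
    by (rule sum.cong) (auto simp: algebra_simps)
  also have "\<dots> = (\<Sum>k<N. A j k * X k) + A j i * (t - X i)"
    using assms by (simp add: sum.distrib)
  finally show ?thesis unfolding matvec_def .
qed

lemma colT_upd:
  assumes "i < N"
  shows "colT m A i (\<lambda>j. matvec m N A (X(i := t)) j - y j)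
       = colT m A i (\<lambda>j. matvec m N A X j - y j) + colT m A i (\<lambda>j. A j i) * (t - X i)"
proof -
  have "(\<Sum>j<m. A j i * (matvec m N A X j + A j i * (t - X i) - y j))
      = (\<Sum>j<m. A j i * (matvec m N A X j - y j) + A j i * A j i * (t - X i))"
    by (rule sum.cong) (auto simp: algebra_simps)
  also have "\<dots> = (\<Sum>j<m. A j i * (matvec m N A X j - y j)) + (\<Sum>j<m. A j i * A j i) * (t - X i)"
    by (simp add: sum.distrib sum_distrib_right)
  finally show ?thesis unfolding colT_def matvec_upd[OF assms] .
qed

theorem mainTheorem7:
  fixes m N :: nat and A :: "nat \<Rightarrow> nat \<Rightarrow> real" and y x0 :: "nat \<Rightarrow> real"
    and lam mu q :: real and n :: nat
  assumes "N > 0" and "lam > 0" and "0 < q" and "q < 1" and "mu > 0"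
  defines "x \<equiv> gaita m N A y lam mu q x0"
  defines "i \<equiv> n mod N"
  shows "x (Suc n) i = 0 \<or>
    (\<bar>x (Suc n) i\<bar> \<ge> eta lam mu q \<and>
     colT m A i (\<lambda>j. matvec m N A (x (Suc n)) j - y j)
       + lam * q * sgn (x (Suc n) i) * \<bar>x (Suc n) i\<bar> powr (q - 1)
     = (1 / mu - colT m A i (\<lambda>j. A j i)) * (x n i - x (Suc n) i))"
proof -
  interpret P lam mu q using assms by unfold_locales auto
  have iN: "i < N" unfolding i_def using assms(1) by simp
  define X where "X = x n"
  define R where "R = colT m A i (\<lambda>j. matvec m N A X j - y j)"
  define S where "S = colT m A i (\<lambda>j. A j i)"
  define z where "z = X i - mu * R"
  define T where "T = Tmap lam mu q z (X i)"
  have xs: "x (Suc n) = X(i := T)"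
    unfolding x_def X_def T_def z_def R_def i_def
    by (simp add: gaita_step_def Let_def)
  have Ti: "x (Suc n) i = T" using xs by simp
  have cT: "colT m A i (\<lambda>j. matvec m N A (x (Suc n)) j - y j) = R + S * (T - X i)"
    unfolding xs R_def S_def by (rule colT_upd[OF iN])
  from Tmap_prop[of z "X i"] have "T = 0 \<or> (\<bar>T\<bar> \<ge> eta lam mu q \<and> (T - z)/mu + lam*q* sgn T * \<bar>T\<bar> powr (q-1) = 0)"
    unfolding T_def .
  then show ?thesis
  proof
    assume "T = 0" then show ?thesis using Ti by simp
  next
    assume h: "\<bar>T\<bar> \<ge> eta lam mu q \<and> (T - z)/mu + lam*q* sgn T * \<bar>T\<bar> powr (q-1) = 0"
    have Rz: "R = (X i - z)/mu" unfolding z_def using assms(5) by simp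
    have "R + S * (T - X i) + lam * q * sgn T * \<bar>T\<bar> powr (q - 1)
        = (X i - z)/mu - (T - z)/mu + S * (T - X i)" using h Rz by simp
    also have "\<dots> = (1/mu - S) * (X i - T)" by (simp add: algebra_simps diff_divide_distrib)
    finally show ?thesis using Ti cT h X_def S_def by simp
  qed
qed

end
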